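(* Let $p$ be an odd prime, $e\ge1$, and let $\mathcal M$ be an orientably-regular embedding of $K_{p[p^e]}$ with $G=\mathrm{Aut}^+(\mathcal M)$ and $H\trianglelefteq G$ the subgroup of automorphisms preserving each of the $p$ parts setwise. Suppose $H=\langle x,z\rangle$ has presentation $\langle x,z\mid x^{p^e}=z^{p^e}=1,\ z^x=z^q\rangle$ with $q=1+p^f$ for some $f\in\{1,\dots,e\}$. Then $N:=\langle x^{p^{e-f}},z\rangle$ is a normal subgroup of $G$.
   Context: $K_{m[n]}$ is the complete multipartite graph with $m$ parts of $n$ vertices each; an orientably-regular embedding of it is an orientable map with this underlying graph whose group $\mathrm{Aut}^+(\mathcal M)$ of orientation-preserving automorphisms acts regularly on arcs. Conjugation is $z^x=x^{-1}zx$. *)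

theory Defs
  imports "HOL-Algebra.Algebra"
begin

text \<open>Algebraic model of an orientably-regular map M(G;R,L): the arcs are the elements
of G = Aut+(M) = <R,L> (L an involution), G acting by left multiplication (regularly);
the vertex at which arc g starts is the left coset g<R>, and the reverse of arc g is gL.\<close>

definition orreg_map :: "('g, 'b) monoid_scheme \<Rightarrow> 'g \<Rightarrow> 'g \<Rightarrow> bool" where
  "orreg_map G R L \<longleftrightarrow> group G \<and> finite (carrier G) \<and> R \<in> carrier G \<and> L \<in> carrier G
     \<and> L \<noteq> \<one>\<^bsub>G\<^esub> \<and> L \<otimes>\<^bsub>G\<^esub> L = \<one>\<^bsub>G\<^esub>
     \<and> generate G {R, L} = carrier G"

definition map_vertices :: "('g, 'b) monoid_scheme \<Rightarrow> 'g \<Rightarrow> 'g set set" where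
  "map_vertices G R = {g <#\<^bsub>G\<^esub> generate G {R} | g. g \<in> carrier G}"

definition arc_mult :: "('g, 'b) monoid_scheme \<Rightarrow> 'g \<Rightarrow> 'g set \<Rightarrow> 'g set \<Rightarrow> nat" where
  "arc_mult G L A B = card {g \<in> A. g \<otimes>\<^bsub>G\<^esub> L \<in> B}"

text \<open>The underlying graph is K_{m[n]}: phi labels the vertices bijectively by
(part, index) in {0..<m} x {0..<n}; distinct vertices in different parts are joined
by exactly one edge, vertices in the same part (and loops) by none.\<close>
definition complete_multipartite_labelling ::
  "('g, 'b) monoid_scheme \<Rightarrow> 'g \<Rightarrow> 'g \<Rightarrow> nat \<Rightarrow> nat \<Rightarrow> ('g set \<Rightarrow> nat \<times> nat) \<Rightarrow> bool" where
  "complete_multipartite_labelling G R L m n phi \<longleftrightarrow>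
     bij_betw phi (map_vertices G R) ({0..<m} \<times> {0..<n}) \<and>
     (\<forall>A \<in> map_vertices G R. \<forall>B \<in> map_vertices G R.
        arc_mult G L A B = (if fst (phi A) \<noteq> fst (phi B) then 1 else 0))"

definition part_stabiliser ::
  "('g, 'b) monoid_scheme \<Rightarrow> 'g \<Rightarrow> ('g set \<Rightarrow> nat \<times> nat) \<Rightarrow> 'g set" where
  "part_stabiliser G R phi = {h \<in> carrier G. \<forall>A \<in> map_vertices G R.
       fst (phi (h <#\<^bsub>G\<^esub> A)) = fst (phi A)}"

end

theory Submission
  imports Defs
begin

context group begin

lemma cancel1 [simp]: "a \<in> carrier G \<Longrightarrow> c \<in> carrier G \<Longrightarrow> a \<otimes> (inv a \<otimes> c) = c"
  by (simp add: m_assoc[symmetric])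
lemma cancel2 [simp]: "a \<in> carrier G \<Longrightarrow> c \<in> carrier G \<Longrightarrow> inv a \<otimes> (a \<otimes> c) = c"
  by (simp add: m_assoc[symmetric])

lemma lcos_img: "g <# M = (\<lambda>c. g \<otimes> c) ` M"
  unfolding l_coset_def by auto

lemma arc_mult_lcos:
  assumes C: "C \<subseteq> carrier G" and D: "D \<subseteq> carrier G" and g: "g \<in> carrier G" and L: "L \<in> carrier G"
  shows "arc_mult G L (g <# C) (g <# D) = arc_mult G L C D"
proof -
  have "{k \<in> g <# C. k \<otimes> L \<in> g <# D} = (\<lambda>c. g \<otimes> c) ` {c \<in> C. c \<otimes> L \<in> D}"
  proof
    show "{k \<in> g <# C. k \<otimes> L \<in> g <# D} \<subseteq> (\<lambda>c. g \<otimes> c) ` {c \<in> C. c \<otimes> L \<in> D}"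
    proof
      fix k assume k: "k \<in> {k \<in> g <# C. k \<otimes> L \<in> g <# D}"
      then obtain c where c: "c \<in> C" "k = g \<otimes> c" by (auto simp: lcos_img)
      from k obtain d where d: "d \<in> D" "k \<otimes> L = g \<otimes> d" by (auto simp: lcos_img)
      have "g \<otimes> (c \<otimes> L) = g \<otimes> d" using d c C D g L by (simp add: m_assoc subsetD)
      then have "c \<otimes> L = d" using c C D g L d by (metis l_cancel m_closed subsetD)
      then show "k \<in> (\<lambda>c. g \<otimes> c) ` {c \<in> C. c \<otimes> L \<in> D}" using c d by auto
    qed
  next
    show "(\<lambda>c. g \<otimes> c) ` {c \<in> C. c \<otimes> L \<in> D} \<subseteq> {k \<in> g <# C. k \<otimes> L \<in> g <# D}"
      using C D g L by (auto simp: lcos_img m_assoc subsetD)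
  qed
  moreover have "inj_on (\<lambda>c. g \<otimes> c) {c \<in> C. c \<otimes> L \<in> D}"
    using C g by (auto simp: inj_on_def subsetD)
  ultimately show ?thesis unfolding arc_mult_def by (simp add: card_image)
qed

lemma vert_sub: "A \<in> map_vertices G R \<Longrightarrow> R \<in> carrier G \<Longrightarrow> A \<subseteq> carrier G"
  unfolding map_vertices_def
  using generate_incl[of "{R}"] by (auto simp: lcos_img)

lemma vert_lcos: "A \<in> map_vertices G R \<Longrightarrow> R \<in> carrier G \<Longrightarrow> g \<in> carrier G \<Longrightarrow> g <# A \<in> map_vertices G R"
  unfolding map_vertices_def
  using generate_incl[of "{R}"] lcos_m_assoc by auto

lemma part_conj:
  assumes R: "R \<in> carrier G" and L: "L \<in> carrier G"
    and lab: "complete_multipartite_labelling G R L m n phi"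
    and h: "h \<in> part_stabiliser G R phi" and g: "g \<in> carrier G"
  shows "g \<otimes> h \<otimes> inv g \<in> part_stabiliser G R phi"
proof -
  let ?V = "map_vertices G R"
  have same: "fst (phi C) = fst (phi D) \<longleftrightarrow> arc_mult G L C D = 0" if "C \<in> ?V" "D \<in> ?V" for C D
    using lab that unfolding complete_multipartite_labelling_def by auto
  have hc: "h \<in> carrier G" using h unfolding part_stabiliser_def by auto
  have "fst (phi ((g \<otimes> h \<otimes> inv g) <# A)) = fst (phi A)" if A: "A \<in> ?V" for A
  proof -
    define B where "B = inv g <# A"
    have B: "B \<in> ?V" using vert_lcos A R g B_def by simp
    have hB: "h <# B \<in> ?V" using vert_lcos B R hc by simp
    have As: "A \<subseteq> carrier G" using vert_sub A R .
    have Bs: "B \<subseteq> carrier G" using vert_sub B R .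
    have hBs: "h <# B \<subseteq> carrier G" using vert_sub hB R .
    have eA: "A = g <# B" unfolding B_def using As g by (simp add: lcos_m_assoc lcos_mult_one)
    have e2: "(g \<otimes> h \<otimes> inv g) <# A = g <# (h <# B)"
      unfolding B_def using As g hc by (simp add: lcos_m_assoc m_assoc)
    have "fst (phi (h <# B)) = fst (phi B)" using h B unfolding part_stabiliser_def by auto
    then have "arc_mult G L (h <# B) B = 0" using same hB B by blast
    then have "arc_mult G L (g <# (h <# B)) (g <# B) = 0" using arc_mult_lcos hBs Bs g L by simp
    then show ?thesis using same vert_lcos hB B R g e2 eA by metis
  qed
  then show ?thesis unfolding part_stabiliser_def using g hc by auto
qed

lemma conj_pow:
  assumes "a \<in> carrier G" "b \<in> carrier G"
  shows "inv a \<otimes> b [^] (j::nat) \<otimes> a = (inv a \<otimes> b \<otimes> a) [^] j"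
proof (induction j)
  case 0 then show ?case using assms by simp
next
  case (Suc j)
  have "inv a \<otimes> b [^] Suc j \<otimes> a = (inv a \<otimes> b [^] j \<otimes> a) \<otimes> (inv a \<otimes> b \<otimes> a)"
    using assms by (simp add: m_assoc)
  then show ?case using Suc by simp
qed

lemma conj_iter:
  assumes x: "x \<in> carrier G" and z: "z \<in> carrier G" and rel: "inv x \<otimes> z \<otimes> x = z [^] (q::nat)"
  shows "inv (x [^] (l::nat)) \<otimes> z [^] (j::nat) \<otimes> x [^] l = z [^] (j * q ^ l)"
proof (induction l arbitrary: j)
  case 0 then show ?case using z by simp
next
  case (Suc l)
  have "inv (x [^] Suc l) \<otimes> z [^] j \<otimes> x [^] Suc l = inv x \<otimes> (inv (x [^] l) \<otimes> z [^] j \<otimes> x [^] l) \<otimes> x"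
    using x z by (simp add: inv_mult_group m_assoc)
  also have "\<dots> = inv x \<otimes> z [^] (j * q ^ l) \<otimes> x" using Suc by simp
  also have "\<dots> = (z [^] q) [^] (j * q ^ l)" using conj_pow x z rel by simp
  also have "\<dots> = z [^] (j * q ^ Suc l)" using z by (simp add: nat_pow_pow mult.commute mult.left_commute)
  finally show ?case .
qed

lemma swap:
  assumes x: "x \<in> carrier G" and z: "z \<in> carrier G" and rel: "inv x \<otimes> z \<otimes> x = z [^] (q::nat)"
  shows "z [^] (j::nat) \<otimes> x [^] (l::nat) = x [^] l \<otimes> z [^] (j * q ^ l)"
proof -
  have "x [^] l \<otimes> z [^] (j * q ^ l) = x [^] l \<otimes> (inv (x [^] l) \<otimes> z [^] j \<otimes> x [^] l)"
    using conj_iter[OF x z rel] by simp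
  also have "\<dots> = z [^] j \<otimes> x [^] l" using x z by (simp add: m_assoc)
  finally show ?thesis by simp
qed

lemma pmult:
  assumes x: "x \<in> carrier G" and z: "z \<in> carrier G" and rel: "inv x \<otimes> z \<otimes> x = z [^] (q::nat)"
  shows "(x [^] (i::nat) \<otimes> z [^] (j::nat)) \<otimes> (x [^] (l::nat) \<otimes> z [^] (k::nat))
     = x [^] (i + l) \<otimes> z [^] (j * q ^ l + k)"
proof -
  have "(x [^] i \<otimes> z [^] j) \<otimes> (x [^] l \<otimes> z [^] k) = x [^] i \<otimes> (z [^] j \<otimes> x [^] l) \<otimes> z [^] k"
    using x z by (simp add: m_assoc)
  also have "\<dots> = x [^] i \<otimes> (x [^] l \<otimes> z [^] (j * q ^ l)) \<otimes> z [^] k" using swap[OF x z rel] by simp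
  also have "\<dots> = x [^] (i + l) \<otimes> z [^] (j * q ^ l + k)" using x z
    by (simp add: m_assoc nat_pow_mult[symmetric])
  finally show ?thesis .
qed

lemma pinv:
  assumes x: "x \<in> carrier G" and z: "z \<in> carrier G" and rel: "inv x \<otimes> z \<otimes> x = z [^] (q::nat)"
    and xn: "x [^] (n::nat) = \<one>" and zn: "z [^] n = \<one>" and n: "n > 0"
  shows "inv (x [^] (i::nat) \<otimes> z [^] (j::nat)) = x [^] (i * (n - 1)) \<otimes> z [^] (j * (n - 1) * q ^ (i * (n - 1)))"
proof -
  have ip: "inv (w [^] m) = w [^] (m * (n - 1))" if w: "w \<in> carrier G" and wn: "w [^] n = \<one>" for w m
  proof -
    have "w [^] m \<otimes> w [^] (m * (n - 1)) = w [^] (n * m)"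
      using w n by (simp add: nat_pow_mult algebra_simps)
    also have "\<dots> = \<one>" using w wn by (simp add: nat_pow_pow[symmetric])
    finally show ?thesis using w by (metis inv_equality nat_pow_closed inv_comm)
  qed
  have "inv (x [^] i \<otimes> z [^] j) = z [^] (j * (n - 1)) \<otimes> x [^] (i * (n - 1))"
    using x z ip xn zn by (simp add: inv_mult_group)
  also have "\<dots> = x [^] (i * (n - 1)) \<otimes> z [^] (j * (n - 1) * q ^ (i * (n - 1)))"
    using swap[OF x z rel] by simp
  finally show ?thesis .
qed

lemma ppow:
  assumes x: "x \<in> carrier G" and z: "z \<in> carrier G" and rel: "inv x \<otimes> z \<otimes> x = z [^] (q::nat)"
  shows "\<exists>j'. (x [^] (i::nat) \<otimes> z [^] (j::nat)) [^] (m::nat) = x [^] (i * m) \<otimes> z [^] (j'::nat)"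
proof (induction m)
  case 0 then show ?case using x z by (intro exI[of _ 0]) simp
next
  case (Suc m)
  then obtain j' :: nat where j': "(x [^] i \<otimes> z [^] j) [^] m = x [^] (i * m) \<otimes> z [^] j'" by blast
  have "(x [^] i \<otimes> z [^] j) [^] Suc m = (x [^] (i * m) \<otimes> z [^] j') \<otimes> (x [^] i \<otimes> z [^] j)"
    using j' by simp
  also have "\<dots> = x [^] (i * m + i) \<otimes> z [^] (j' * q ^ i + j)" using pmult[OF x z rel] by simp
  finally show ?case by (intro exI[of _ "j' * q ^ i + j"]) (simp add: algebra_simps)
qed

lemma pred:
  assumes x: "x \<in> carrier G" and xn: "x [^] (n::nat) = \<one>"
  shows "x [^] (i::nat) = x [^] (i mod n)"
proof -
  have "x [^] i = x [^] (n * (i div n)) \<otimes> x [^] (i mod n)" using x by (simp add: nat_pow_mult)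
  also have "\<dots> = x [^] (i mod n)" using x xn by (simp add: nat_pow_pow[symmetric])
  finally show ?thesis .
qed


lemma gen_form:
  assumes x: "x \<in> carrier G" and z: "z \<in> carrier G" and rel: "inv x \<otimes> z \<otimes> x = z [^] (q::nat)"
    and xn: "x [^] (n::nat) = \<one>" and zn: "z [^] n = \<one>" and n: "n > 0"
  shows "generate G {x, z} \<subseteq> (\<lambda>(i, j). x [^] i \<otimes> z [^] j) ` ({..<n} \<times> {..<n})"
proof -
  let ?S = "{x [^] (i::nat) \<otimes> z [^] (j::nat) | i j. True}"
  have "subgroup ?S G"
  proof (rule subgroupI)
    show "?S \<subseteq> carrier G" using x z by auto
    show "?S \<noteq> {}" by auto
    show "inv a \<in> ?S" if "a \<in> ?S" for a
      using that pinv[OF x z rel xn zn n] by blast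
    show "a \<otimes> b \<in> ?S" if "a \<in> ?S" "b \<in> ?S" for a b
      using that pmult[OF x z rel] by blast
  qed
  moreover have "{x, z} \<subseteq> ?S"
  proof -
    have "x = x [^] (1::nat) \<otimes> z [^] (0::nat)" using x by simp
    moreover have "z = x [^] (0::nat) \<otimes> z [^] (1::nat)" using z by simp
    ultimately show ?thesis by blast
  qed
  ultimately have "generate G {x, z} \<subseteq> ?S" by (metis generate_subgroup_incl)
  moreover have "?S \<subseteq> (\<lambda>(i, j). x [^] i \<otimes> z [^] j) ` ({..<n} \<times> {..<n})"
  proof
    fix a assume "a \<in> ?S"
    then obtain i j :: nat where a: "a = x [^] i \<otimes> z [^] j" by blast
    then have "a = x [^] (i mod n) \<otimes> z [^] (j mod n)" using pred[OF x xn] pred[OF z zn] by metis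
    moreover have "(i mod n, j mod n) \<in> {..<n} \<times> {..<n}" using n by auto
    ultimately show "a \<in> (\<lambda>(i, j). x [^] i \<otimes> z [^] j) ` ({..<n} \<times> {..<n})" by force
  qed
  ultimately show ?thesis by blast
qed

lemma inj_xz:
  assumes x: "x \<in> carrier G" and z: "z \<in> carrier G" and rel: "inv x \<otimes> z \<otimes> x = z [^] (q::nat)"
    and xn: "x [^] (n::nat) = \<one>" and zn: "z [^] n = \<one>" and n: "n > 0"
    and card: "card (generate G {x, z}) = n * n"
    and eq: "x [^] (s::nat) = z [^] (t::nat)"
  shows "n dvd s"
proof -
  let ?f = "\<lambda>(i::nat, j::nat). x [^] i \<otimes> z [^] j"
  let ?B = "{..<n} \<times> {..<n}"
  have fin: "finite (?f ` ?B)" by simp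
  have "card (generate G {x, z}) \<le> card (?f ` ?B)"
    using card_mono[OF fin gen_form[OF x z rel xn zn n]] .
  moreover have "card (?f ` ?B) \<le> card ?B" by (rule card_image_le) simp
  moreover have "card ?B = n * n" by simp
  ultimately have "card (?f ` ?B) = card ?B" using card by linarith
  then have inj: "inj_on ?f ?B" by (rule eq_card_imp_inj_on[rotated]) simp
  have "?f (s mod n, 0) = ?f (0, t mod n)"
    using eq pred[OF x xn, of s] pred[OF z zn, of t] x z by simp
  moreover have "(s mod n, 0) \<in> ?B" "(0, t mod n) \<in> ?B" using n by auto
  ultimately have "(s mod n, 0) = (0, t mod n)" using inj by (meson inj_onD)
  then show ?thesis by auto
qed


lemma key:
  assumes x: "x \<in> carrier G" and z: "z \<in> carrier G" and rel: "inv x \<otimes> z \<otimes> x = z [^] (q::nat)"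
    and xn: "x [^] (n::nat) = \<one>" and zn: "z [^] n = \<one>" and n: "n > 0"
    and card: "card (generate G {x, z}) = n * n"
    and w: "w \<in> generate G {x, z}" and y: "y \<in> generate G {x, z}"
    and wr: "inv y \<otimes> w \<otimes> y = w [^] (1 + (r::nat))"
  shows "\<exists>a b::nat. w = x [^] a \<otimes> z [^] b \<and> n dvd a * r"
proof -
  obtain a b :: nat where wab: "w = x [^] a \<otimes> z [^] b"
    using gen_form[OF x z rel xn zn n] w by fastforce
  obtain c d :: nat where ycd: "y = x [^] c \<otimes> z [^] d"
    using gen_form[OF x z rel xn zn n] y by fastforce
  have wc: "w \<in> carrier G" "y \<in> carrier G" using wab ycd x z by auto
  have "w [^] (1 + r) = w \<otimes> w [^] r" using wc nat_pow_mult[of w 1 r] by simp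
  then have "w [^] r = inv w \<otimes> (inv y \<otimes> w \<otimes> y)" using wr wc by (simp add: m_assoc)
  also have "\<dots> = inv w \<otimes> inv y \<otimes> w \<otimes> y" using wc by (simp add: m_assoc)
  also have "\<dots> = x [^] (a * (n - 1) + c * (n - 1) + a + c) \<otimes>
      z [^] ((((b * (n - 1) * q ^ (a * (n - 1))) * q ^ (c * (n - 1)) + d * (n - 1) * q ^ (c * (n - 1))) * q ^ a + b) * q ^ c + d)"
    unfolding wab ycd pinv[OF x z rel xn zn n] pmult[OF x z rel] by simp
  also have "a * (n - 1) + c * (n - 1) + a + c = n * (a + c)" using n
    by (cases n) (auto simp: algebra_simps)
  finally obtain J :: nat where J: "w [^] r = x [^] (n * (a + c)) \<otimes> z [^] J" by blast
  have "x [^] (n * (a + c)) = \<one>" using x xn by (simp add: nat_pow_pow[symmetric])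
  then have J2: "w [^] r = z [^] J" using J z by simp
  obtain j3 :: nat where j3: "w [^] r = x [^] (a * r) \<otimes> z [^] j3"
    using ppow[OF x z rel] wab by blast
  have iz: "inv (z [^] j3) = z [^] (j3 * (n - 1))"
    using pinv[OF x z rel xn zn n, of 0 j3] x z by simp
  have "x [^] (a * r) = z [^] J \<otimes> inv (z [^] j3)" using J2 j3 x z
    by (simp add: inv_solve_right)
  also have "\<dots> = z [^] (J + j3 * (n - 1))" using iz z by (simp add: nat_pow_mult)
  finally have "n dvd a * r" by (rule inj_xz[OF x z rel xn zn n card])
  then show ?thesis using wab by blast
qed


lemma sub_pow:
  assumes "subgroup H G" "h \<in> H" shows "h [^] (k::nat) \<in> H"
proof (induction k)
  case 0 then show ?case using assms subgroup.one_closed by simp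
next
  case (Suc k) then show ?case using assms subgroup.m_closed by (simp add: nat_pow_Suc)
qed

lemma (in group) main_aux:
  fixes R L x z :: 'a
    and phi :: "'a set \<Rightarrow> nat \<times> nat" and H :: "'a set" and p e f :: nat
  assumes "Factorial_Ring.prime p" and "odd p" and "1 \<le> e"
    and "orreg_map G R L"
    and "complete_multipartite_labelling G R L p (p ^ e) phi"
    and "H = part_stabiliser G R phi"
    and "x \<in> H" and "z \<in> H" and "generate G {x, z} = H"
    and "x [^]\<^bsub>G\<^esub> (p ^ e) = \<one>\<^bsub>G\<^esub>"
    and "z [^]\<^bsub>G\<^esub> (p ^ e) = \<one>\<^bsub>G\<^esub>"
    and "inv\<^bsub>G\<^esub> x \<otimes>\<^bsub>G\<^esub> z \<otimes>\<^bsub>G\<^esub> x = z [^]\<^bsub>G\<^esub> (1 + p ^ f)"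
    and "card H = p ^ (2 * e)"
    and "1 \<le> f" and "f \<le> e"
  shows "generate G {x [^]\<^bsub>G\<^esub> (p ^ (e - f)), z} \<lhd> G"
proof -
  note A = assms
  have RL: "R \<in> carrier G" "L \<in> carrier G" using A(4) unfolding orreg_map_def by auto
  have xz: "x \<in> carrier G" "z \<in> carrier G" using A(6-8) unfolding part_stabiliser_def by auto
  define n where "n = p ^ e"
  have p0: "p > 0" using A(1) prime_gt_0_nat by blast
  have n0: "n > 0" unfolding n_def using p0 by simp
  have cardH: "card (generate G {x, z}) = n * n"
    using A(9,13) unfolding n_def by (simp add: mult_2 power_add)
  have xn: "x [^] n = \<one>" and zn: "z [^] n = \<one>" using A(10,11) n_def by auto
  note rel = A(12)
  define x0 where "x0 = x [^] p ^ (e - f)"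
  let ?N = "generate G {x0, z}"
  have x0c: "x0 \<in> carrier G" unfolding x0_def using xz by simp
  have Nsub: "subgroup ?N G" using generate_is_subgroup x0c xz by simp
  have x0N: "x0 \<in> ?N" and zN: "z \<in> ?N" by (auto intro: generate.incl)
  have inN: "x0 [^] (t::nat) \<otimes> z [^] (b::nat) \<in> ?N" for t b
    using Nsub x0N zN sub_pow subgroup.m_closed by metis
  have Hc: "H \<subseteq> carrier G" using A(6) unfolding part_stabiliser_def by auto
  have cpow: "g \<otimes> b [^] (j::nat) \<otimes> inv g = (g \<otimes> b \<otimes> inv g) [^] j"
    if "g \<in> carrier G" "b \<in> carrier G" for g b j
    using conj_pow[of "inv g" b j] that by simp
  have conjN: "g \<otimes> h \<otimes> inv g \<in> ?N" if g: "g \<in> carrier G" and h: "h \<in> ?N" for g h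
  proof -
    let ?M = "{h \<in> carrier G. g \<otimes> h \<otimes> inv g \<in> ?N}"
    have "subgroup ?M G"
    proof (rule subgroupI)
      show "?M \<subseteq> carrier G" by auto
      show "?M \<noteq> {}" using g subgroup.one_closed[OF Nsub] by (auto intro!: exI[of _ "\<one>"])
      show "inv a \<in> ?M" if "a \<in> ?M" for a
      proof -
        have "g \<otimes> inv a \<otimes> inv g = inv (g \<otimes> a \<otimes> inv g)" using that g by (simp add: inv_mult_group m_assoc)
        then show ?thesis using that subgroup.m_inv_closed[OF Nsub] by auto
      qed
      show "a \<otimes> b \<in> ?M" if "a \<in> ?M" "b \<in> ?M" for a b
      proof -
        have "g \<otimes> (a \<otimes> b) \<otimes> inv g = (g \<otimes> a \<otimes> inv g) \<otimes> (g \<otimes> b \<otimes> inv g)" using that g by (simp add: m_assoc)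
        then show ?thesis using that subgroup.m_closed[OF Nsub] by auto
      qed
    qed
    moreover have "{x0, z} \<subseteq> ?M"
    proof -
      define y where "y = g \<otimes> x \<otimes> inv g"
      define w where "w = g \<otimes> z \<otimes> inv g"
      have yH: "y \<in> generate G {x, z}" unfolding y_def A(9)
        using part_conj[OF RL A(5)] A(6,7) g by simp
      have wH: "w \<in> generate G {x, z}" unfolding w_def A(9)
        using part_conj[OF RL A(5)] A(6,8) g by simp
      obtain c d :: nat where ycd: "y = x [^] c \<otimes> z [^] d"
        using gen_form[OF xz rel xn zn n0] yH by fastforce
      obtain j' :: nat where j': "y [^] p ^ (e - f) = x [^] (c * p ^ (e - f)) \<otimes> z [^] j'"
        using ppow[OF xz rel] ycd by blast
      have "g \<otimes> x0 \<otimes> inv g = y [^] p ^ (e - f)" unfolding x0_def y_def using cpow g xz by simp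
      also have "\<dots> = x0 [^] c \<otimes> z [^] j'" unfolding j' x0_def using xz
        by (simp add: nat_pow_pow mult.commute)
      finally have x0M: "x0 \<in> ?M" using inN x0c by simp
      have "inv y \<otimes> w \<otimes> y = g \<otimes> (inv x \<otimes> z \<otimes> x) \<otimes> inv g"
        unfolding y_def w_def using g xz by (simp add: inv_mult_group m_assoc)
      also have "\<dots> = w [^] (1 + p ^ f)" unfolding rel w_def by (rule cpow[OF g xz(2)])
      finally obtain a b :: nat where wab: "w = x [^] a \<otimes> z [^] b" and dv: "n dvd a * p ^ f"
        using key[OF xz rel xn zn n0 cardH wH yH] by blast
      have "p ^ (e - f) * p ^ f dvd a * p ^ f" using dv A(15) unfolding n_def
        by (simp add: power_add[symmetric])
      then have "p ^ (e - f) dvd a" using p0 by simp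
      then obtain t where t: "a = p ^ (e - f) * t" by blast
      have "w = x0 [^] t \<otimes> z [^] b" unfolding wab t x0_def using xz by (simp add: nat_pow_pow)
      then have "z \<in> ?M" using inN xz w_def by simp
      with x0M show ?thesis by blast
    qed
    ultimately have "?N \<subseteq> ?M" by (metis generate_subgroup_incl)
    then show ?thesis using h by blast
  qed
  show ?thesis unfolding x0_def[symmetric] using normal_inv_iff Nsub conjN by blast
qed


end

theorem lemma3p4:
  fixes G :: "('g, 'b) monoid_scheme" and R L x z :: 'g
    and phi :: "'g set \<Rightarrow> nat \<times> nat" and H :: "'g set" and p e f :: nat
  assumes "Factorial_Ring.prime p" and "odd p" and "1 \<le> e"
    and "orreg_map G R L"
    and "complete_multipartite_labelling G R L p (p ^ e) phi"
    and "H = part_stabiliser G R phi"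
    and "x \<in> H" and "z \<in> H" and "generate G {x, z} = H"
    and "x [^]\<^bsub>G\<^esub> (p ^ e) = \<one>\<^bsub>G\<^esub>"
    and "z [^]\<^bsub>G\<^esub> (p ^ e) = \<one>\<^bsub>G\<^esub>"
    and "inv\<^bsub>G\<^esub> x \<otimes>\<^bsub>G\<^esub> z \<otimes>\<^bsub>G\<^esub> x = z [^]\<^bsub>G\<^esub> (1 + p ^ f)"
    and "card H = p ^ (2 * e)"
    and "1 \<le> f" and "f \<le> e"
  shows "generate G {x [^]\<^bsub>G\<^esub> (p ^ (e - f)), z} \<lhd> G"
  using assms group.main_aux[of G] unfolding orreg_map_def by blast

end
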